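(* Let $R$ be an associative unital division ring over a field $F$ of characteristic $0$, let $\alpha\in R$, $q\in F\setminus\{0\}$, $\alpha_M=\alpha q^M$, and let $N\geq4$. Let $y_M\in R$ ($M\in\mathbb{Z}$) be invertible and satisfy for all $M\in\mathbb{Z}$ $$y_{M+N}=\alpha_My_{M+1}+y_{M+2}\bigl(y_M^{-1}-y_{M+N-1}^{-1}\alpha_{M-1}\bigr)y_{M+N-2}.$$ In products $\prod_{k=a}^{b}c_k:=c_ac_{a+1}\cdots c_b$ (factors ordered by increasing $k$). (a) If $N$ is even, then $u_M:=y_{M+3}y_{M+2}^{-1}$ satisfies for all $M$ $$u_{M+N-3}u_{M+N-4}-u_{M-1}u_{M-2}=\alpha_M\prod_{k=0}^{N-4}u_{M+k-1}^{-1}-\Bigl(\prod_{k=0}^{N-4}u_{M+k}^{-1}\Bigr)\alpha_{M-1}.$$ (b) If $N\geq5$ is odd and $K=\lfloor N/2\rfloor$, then $u_M:=y_{M+4}y_{M+2}^{-1}$ satisfies for all $M$ $$\prod_{k=1-K}^{0}u_{M-2k-1}-u_{M-2}\prod_{k=2-K}^{0}u_{M-2k-1}=\alpha_M-\Bigl(\prod_{k=0}^{K-2}u_{M+2k}^{-1}\Bigr)\alpha_{M-1}\prod_{k=2-K}^{0}u_{M-2k-1}.$$ *)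

theory Defs
  imports Complex_Main
begin

definition oprod :: "(int \<Rightarrow> 'a::monoid_mult) \<Rightarrow> int \<Rightarrow> int \<Rightarrow> 'a" where
  "oprod c a b = prod_list (map c [a..b])"

end

theory Submission
  imports Defs
begin

lemma tele_n:
  fixes g :: "int \<Rightarrow> 'r::division_ring"
  assumes nz: "\<forall>k. g k \<noteq> 0"
  shows "oprod (\<lambda>k. g k * inverse (g (k+1))) a (a + int n - 1) = g a * inverse (g (a + int n))"
proof (induction n)
  case 0
  then show ?case using nz by (simp add: oprod_def)
next
  case (Suc n)
  have "[a..a + int (Suc n) - 1] = [a..a + int n - 1] @ [a + int n]"
    using upto_rec2[of a "a + int n"] by simp
  hence "oprod (\<lambda>k. g k * inverse (g (k+1))) a (a + int (Suc n) - 1)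
     = oprod (\<lambda>k. g k * inverse (g (k+1))) a (a + int n - 1) * (g (a + int n) * inverse (g (a + int n + 1)))"
    by (simp add: oprod_def)
  also have "\<dots> = g a * inverse (g (a + int n)) * (g (a + int n) * inverse (g (a + int n + 1)))"
    using Suc by simp
  also have "\<dots> = g a * inverse (g (a + int n + 1))"
    using nz by (simp add: mult.assoc flip: mult.assoc[of "inverse _"])
  also have "a + int n + 1 = a + int (Suc n)" by simp
  finally show ?case .
qed

lemma tele:
  fixes g :: "int \<Rightarrow> 'r::division_ring"
  assumes nz: "\<forall>k. g k \<noteq> 0" and ab: "a \<le> b + 1"
  shows "oprod (\<lambda>k. g k * inverse (g (k+1))) a b = g a * inverse (g (b+1))"
proof -
  obtain n where n: "b + 1 = a + int n" using ab
    by (metis add.commute le_iff_add zle_iff_zadd)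
  have b: "b = a + int n - 1" using n by simp
  show ?thesis using tele_n[OF nz, of a n] by (simp add: b)
qed

lemma partA:
  fixes emb :: "'f::field_char_0 \<Rightarrow> 'r::division_ring"
    and \<alpha> :: 'r and q :: 'f and N :: int and y :: "int \<Rightarrow> 'r"
  assumes y_inv: "\<forall>M. y M \<noteq> 0"
    and rec: "\<forall>M. y (M + N) = emb (q powi M) * \<alpha> * y (M + 1)
                 + y (M + 2) * (inverse (y M) - inverse (y (M + N - 1)) * (emb (q powi (M - 1)) * \<alpha>))
                   * y (M + N - 2)"
    and a_def: "\<forall>M. a M = emb (q powi M) * \<alpha>"
    and N_ge: "N \<ge> 4"
    and u_def: "\<forall>M. u M = y (M + 3) * inverse (y (M + 2))"
  shows "u (M + N - 3) * u (M + N - 4) - u (M - 1) * u (M - 2)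
                  = a M * oprod (\<lambda>k. inverse (u (M + k - 1))) 0 (N - 4)
                    - oprod (\<lambda>k. inverse (u (M + k))) 0 (N - 4) * a (M - 1)"
proof -
  have r: "y (M + N) = a M * y (M + 1) + y (M + 2) * (inverse (y M) - inverse (y (M + N - 1)) * a (M - 1)) * y (M + N - 2)"
    using rec a_def by simp
  have ui: "inverse (u j) = y (j + 2) * inverse (y (j + 3))" for j
    using u_def y_inv by (simp add: nonzero_inverse_mult_distrib)
  have f1: "(\<lambda>k. inverse (u (M + k - 1))) = (\<lambda>k. (\<lambda>j. y (M + j + 1)) k * inverse ((\<lambda>j. y (M + j + 1)) (k + 1)))"
    by (rule ext) (simp add: ui algebra_simps)
  have p1: "oprod (\<lambda>k. inverse (u (M + k - 1))) 0 (N - 4) = y (M + 1) * inverse (y (M + N - 2))"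
    unfolding f1 using tele[of "\<lambda>j. y (M + j + 1)" 0 "N - 4"] y_inv N_ge by (simp add: algebra_simps)
  have f2: "(\<lambda>k. inverse (u (M + k))) = (\<lambda>k. (\<lambda>j. y (M + j + 2)) k * inverse ((\<lambda>j. y (M + j + 2)) (k + 1)))"
    by (rule ext) (simp add: ui algebra_simps)
  have p2: "oprod (\<lambda>k. inverse (u (M + k))) 0 (N - 4) = y (M + 2) * inverse (y (M + N - 1))"
    unfolding f2 using tele[of "\<lambda>j. y (M + j + 2)" 0 "N - 4"] y_inv N_ge by (simp add: algebra_simps)
  have l1: "u (M + N - 3) * u (M + N - 4) = y (M + N) * inverse (y (M + N - 2))"
  proof -
    have "u (M + N - 3) = y (M + N) * inverse (y (M + N - 1))" using u_def by (simp add: algebra_simps)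
    moreover have "u (M + N - 4) = y (M + N - 1) * inverse (y (M + N - 2))" using u_def by (simp add: algebra_simps)
    ultimately show ?thesis using y_inv by (simp add: mult.assoc flip: mult.assoc[of "inverse _"])
  qed
  have l2: "u (M - 1) * u (M - 2) = y (M + 2) * inverse (y M)"
  proof -
    have "u (M - 1) = y (M + 2) * inverse (y (M + 1))" using u_def by (simp add: algebra_simps)
    moreover have "u (M - 2) = y (M + 1) * inverse (y M)" using u_def by (simp add: algebra_simps)
    ultimately show ?thesis using y_inv by (simp add: mult.assoc flip: mult.assoc[of "inverse _"])
  qed
  have nz: "y (M + N - 2) \<noteq> 0" using y_inv by simp
  have "y (M + N) * inverse (y (M + N - 2)) = a M * (y (M + 1) * inverse (y (M + N - 2)))
     + y (M + 2) * (inverse (y M) - inverse (y (M + N - 1)) * a (M - 1))"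
    apply (subst r) using nz by (simp add: distrib_right mult.assoc)
  then show ?thesis unfolding l1 l2 p1 p2 by (simp add: algebra_simps)
qed

lemma partB:
  fixes emb :: "'f::field_char_0 \<Rightarrow> 'r::division_ring"
    and \<alpha> :: 'r and q :: 'f and N :: int and y :: "int \<Rightarrow> 'r"
  assumes y_inv: "\<forall>M. y M \<noteq> 0"
    and rec: "\<forall>M. y (M + N) = emb (q powi M) * \<alpha> * y (M + 1)
                 + y (M + 2) * (inverse (y M) - inverse (y (M + N - 1)) * (emb (q powi (M - 1)) * \<alpha>))
                   * y (M + N - 2)"
    and a_def: "\<forall>M. a M = emb (q powi M) * \<alpha>"
    and N_odd: "N = 2 * K + 1" and K_ge: "K \<ge> 2"
    and u_def: "\<forall>M. u M = y (M + 4) * inverse (y (M + 2))"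
  shows "oprod (\<lambda>k. u (M - 2 * k - 1)) (1 - K) 0
                    - u (M - 2) * oprod (\<lambda>k. u (M - 2 * k - 1)) (2 - K) 0
                  = a M - oprod (\<lambda>k. inverse (u (M + 2 * k))) 0 (K - 2) * a (M - 1)
                          * oprod (\<lambda>k. u (M - 2 * k - 1)) (2 - K) 0"
proof -
  have r: "y (M + N) = a M * y (M + 1) + y (M + 2) * (inverse (y M) - inverse (y (M + N - 1)) * a (M - 1)) * y (M + N - 2)"
    using rec a_def by simp
  have ui: "inverse (u j) = y (j + 2) * inverse (y (j + 4))" for j
    using u_def y_inv by (simp add: nonzero_inverse_mult_distrib)
  have f1: "(\<lambda>k. u (M - 2 * k - 1)) = (\<lambda>k. (\<lambda>j. y (M - 2 * j + 3)) k * inverse ((\<lambda>j. y (M - 2 * j + 3)) (k + 1)))"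
    by (rule ext) (simp add: u_def algebra_simps)
  have p1: "oprod (\<lambda>k. u (M - 2 * k - 1)) (1 - K) 0 = y (M + N) * inverse (y (M + 1))"
    unfolding f1 using tele[of "\<lambda>j. y (M - 2 * j + 3)" "1 - K" 0] y_inv K_ge N_odd by (simp add: algebra_simps)
  have p2: "oprod (\<lambda>k. u (M - 2 * k - 1)) (2 - K) 0 = y (M + N - 2) * inverse (y (M + 1))"
    unfolding f1 using tele[of "\<lambda>j. y (M - 2 * j + 3)" "2 - K" 0] y_inv K_ge N_odd by (simp add: algebra_simps)
  have f3: "(\<lambda>k. inverse (u (M + 2 * k))) = (\<lambda>k. (\<lambda>j. y (M + 2 * j + 2)) k * inverse ((\<lambda>j. y (M + 2 * j + 2)) (k + 1)))"
    by (rule ext) (simp add: ui algebra_simps)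
  have p3: "oprod (\<lambda>k. inverse (u (M + 2 * k))) 0 (K - 2) = y (M + 2) * inverse (y (M + N - 1))"
    unfolding f3 using tele[of "\<lambda>j. y (M + 2 * j + 2)" 0 "K - 2"] y_inv K_ge N_odd by (simp add: algebra_simps)
  have l2: "u (M - 2) = y (M + 2) * inverse (y M)" using u_def by (simp add: algebra_simps)
  have nz: "y (M + 1) \<noteq> 0" using y_inv by simp
  have "y (M + N) * inverse (y (M + 1)) = a M
     + y (M + 2) * (inverse (y M) - inverse (y (M + N - 1)) * a (M - 1)) * (y (M + N - 2) * inverse (y (M + 1)))"
    apply (subst r) using nz by (simp add: distrib_right mult.assoc)
  then show ?thesis unfolding l2 p1 p2 p3 by (simp add: algebra_simps)
qed

theorem proposition6p8:
  fixes emb :: "'f::field_char_0 \<Rightarrow> 'r::division_ring"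
    and \<alpha> :: 'r and q :: 'f and N :: int and y :: "int \<Rightarrow> 'r"
  assumes emb_add: "\<forall>a b. emb (a + b) = emb a + emb b"
    and emb_mult: "\<forall>a b. emb (a * b) = emb a * emb b"
    and emb_one: "emb 1 = 1"
    and emb_central: "\<forall>c x. emb c * x = x * emb c"
    and q_nz: "q \<noteq> 0"
    and N_ge: "N \<ge> 4"
    and y_inv: "\<forall>M. y M \<noteq> 0"
    and rec: "\<forall>M. y (M + N) = emb (q powi M) * \<alpha> * y (M + 1)
                 + y (M + 2) * (inverse (y M) - inverse (y (M + N - 1)) * (emb (q powi (M - 1)) * \<alpha>))
                   * y (M + N - 2)"
  shows "(even N \<longrightarrow>
           (let u = (\<lambda>M. y (M + 3) * inverse (y (M + 2)));
                a = (\<lambda>M. emb (q powi M) * \<alpha>)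
            in \<forall>M. u (M + N - 3) * u (M + N - 4) - u (M - 1) * u (M - 2)
                  = a M * oprod (\<lambda>k. inverse (u (M + k - 1))) 0 (N - 4)
                    - oprod (\<lambda>k. inverse (u (M + k))) 0 (N - 4) * a (M - 1)))
       \<and> (odd N \<and> N \<ge> 5 \<longrightarrow>
           (let u = (\<lambda>M. y (M + 4) * inverse (y (M + 2)));
                a = (\<lambda>M. emb (q powi M) * \<alpha>);
                K = N div 2
            in \<forall>M. oprod (\<lambda>k. u (M - 2 * k - 1)) (1 - K) 0
                    - u (M - 2) * oprod (\<lambda>k. u (M - 2 * k - 1)) (2 - K) 0
                  = a M - oprod (\<lambda>k. inverse (u (M + 2 * k))) 0 (K - 2) * a (M - 1)
                          * oprod (\<lambda>k. u (M - 2 * k - 1)) (2 - K) 0))"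
  proof (intro conjI impI)
  define a where "a = (\<lambda>M. emb (q powi M) * \<alpha>)"
  have ad: "\<forall>M. a M = emb (q powi M) * \<alpha>" by (simp add: a_def)
  show "let u = (\<lambda>M. y (M + 3) * inverse (y (M + 2)));
                a = (\<lambda>M. emb (q powi M) * \<alpha>)
            in \<forall>M. u (M + N - 3) * u (M + N - 4) - u (M - 1) * u (M - 2)
                  = a M * oprod (\<lambda>k. inverse (u (M + k - 1))) 0 (N - 4)
                    - oprod (\<lambda>k. inverse (u (M + k))) 0 (N - 4) * a (M - 1)"
    unfolding Let_def
    apply (intro allI)
    apply (rule partA[where y = y and u = "\<lambda>M. y (M + 3) * inverse (y (M + 2))" and emb = emb and q = q and \<alpha> = \<alpha> and a = "\<lambda>M. emb (q powi M) * \<alpha>"])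
    using y_inv rec N_ge by simp_all
next
  assume o: "odd N \<and> N \<ge> 5"
  have NK: "N = 2 * (N div 2) + 1" using o by presburger
  have K2: "N div 2 \<ge> 2" using o by presburger
  show "let u = (\<lambda>M. y (M + 4) * inverse (y (M + 2)));
                a = (\<lambda>M. emb (q powi M) * \<alpha>);
                K = N div 2
            in \<forall>M. oprod (\<lambda>k. u (M - 2 * k - 1)) (1 - K) 0
                    - u (M - 2) * oprod (\<lambda>k. u (M - 2 * k - 1)) (2 - K) 0
                  = a M - oprod (\<lambda>k. inverse (u (M + 2 * k))) 0 (K - 2) * a (M - 1)
                          * oprod (\<lambda>k. u (M - 2 * k - 1)) (2 - K) 0"
    unfolding Let_def
    apply (intro allI)
    apply (rule partB[where y = y and u = "\<lambda>M. y (M + 4) * inverse (y (M + 2))" and emb = emb and q = q and \<alpha> = \<alpha> and a = "\<lambda>M. emb (q powi M) * \<alpha>" and N = N])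
    using y_inv rec NK K2 by simp_all
qed

end
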